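(* Let $V\in\mathcal{UM}$ with $\deg(V,0)=2$, let $\gamma,\bar\gamma\ge0$ with $\gamma+\bar\gamma>0$, and let $U(x)=\gamma W'(x)+\bar\gamma W'(-x)$. If the function $\gamma a+\bar\gamma\bar a:(0,\infty)\to\mathbb R$ has a real-analytic extension to $[0,\infty)$ (i.e. to an open set containing $[0,\infty)$), then $U$ is even. If moreover $V$ is not even, then $\gamma=\bar\gamma$.
   Context: $\mathcal{UM}$: real-analytic $V:\mathbb R\to\mathbb R_{\ge0}$ with $V(0)=0$, $yV'(y)>0$ for $y\neq0$, $V(y)\to\infty$ as $y\to\pm\infty$; $\deg(V,0)$ is the least $m$ with $V^{(m)}(0)\ne0$. For $\deg(V,0)=2$, $V_*$ is the bi-analytic map with $V_*'>0$ and $V_*^2=V$, and $W=V_*^{-1}$. $\bar V(y)=V(-y)$; $V^{-1}$ is the inverse of $V|_{[0,\infty)}$. $a(\theta)=\int_0^{V^{-1}(\theta)}\frac{dy}{\sqrt2\sqrt{\theta-V(y)}}$ and $\bar a(\theta)=\int_0^{\bar V^{-1}(\theta)}\frac{dy}{\sqrt2\sqrt{\theta-\bar V(y)}}$ for $\theta>0$; equivalently $\gamma a(\theta)+\bar\gamma\bar a(\theta)=\frac1{\sqrt2}\int_0^1\frac{U(\sqrt\theta s)}{\sqrt{1-s^2}}ds$. *)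

theory Defs
  imports "HOL-Analysis.Analysis"
begin

definition real_analytic_at :: "(real \<Rightarrow> real) \<Rightarrow> real \<Rightarrow> bool" where
  "real_analytic_at f x \<longleftrightarrow>
     (\<exists>r>0. \<exists>c::nat \<Rightarrow> real. \<forall>y. \<bar>y - x\<bar> < r \<longrightarrow> (\<lambda>n. c n * (y - x) ^ n) sums f y)"

definition real_analytic_on :: "real set \<Rightarrow> (real \<Rightarrow> real) \<Rightarrow> bool" where
  "real_analytic_on S f \<longleftrightarrow> (\<forall>x\<in>S. real_analytic_at f x)"

definition UM :: "(real \<Rightarrow> real) \<Rightarrow> bool" where
  "UM V \<longleftrightarrow> real_analytic_on UNIV V \<and> (\<forall>y. V y \<ge> 0) \<and> V 0 = 0
     \<and> (\<forall>y. y \<noteq> 0 \<longrightarrow> y * deriv V y > 0)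
     \<and> filterlim V at_top at_top \<and> filterlim V at_top at_bot"

definition deg0 :: "(real \<Rightarrow> real) \<Rightarrow> nat" where
  "deg0 V = (LEAST m. (deriv ^^ m) V 0 \<noteq> 0)"

text \<open>V_* (the unique increasing map with V_*^2 = V) and W = V_*^{-1}.\<close>
definition Vstar :: "(real \<Rightarrow> real) \<Rightarrow> real \<Rightarrow> real" where
  "Vstar V y = sgn y * sqrt (V y)"

definition Wfun :: "(real \<Rightarrow> real) \<Rightarrow> real \<Rightarrow> real" where
  "Wfun V = inv (Vstar V)"

definition Vbar :: "(real \<Rightarrow> real) \<Rightarrow> real \<Rightarrow> real" where
  "Vbar V y = V (- y)"

definition Vinv :: "(real \<Rightarrow> real) \<Rightarrow> real \<Rightarrow> real" where
  "Vinv V \<theta> = (THE y. y \<ge> 0 \<and> V y = \<theta>)"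

text \<open>a(\<theta>) as a (Henstock--Kurzweil, hence improper) integral.\<close>
definition afun :: "(real \<Rightarrow> real) \<Rightarrow> real \<Rightarrow> real" where
  "afun V \<theta> = integral {0..Vinv V \<theta>} (\<lambda>y. 1 / (sqrt 2 * sqrt (\<theta> - V y)))"

end

theory Submission
  imports Defs "HOL-Complex_Analysis.Complex_Analysis"
begin

definition hext :: "(real \<Rightarrow> real) \<Rightarrow> real \<Rightarrow> bool" where
  "hext f x \<longleftrightarrow> (\<exists>r>0. \<exists>g. g holomorphic_on ball (complex_of_real x) r \<and>
      (\<forall>y. \<bar>y - x\<bar> < r \<longrightarrow> g (of_real y) = of_real (f y)))"

lemma ra_imp_hext:
  assumes "real_analytic_at f x"
  shows "hext f x"
proof -
  obtain r c where r: "r > 0" and c: "\<And>y. \<bar>y - x\<bar> < r \<Longrightarrow> (\<lambda>n. c n * (y - x) ^ n) sums f y"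
    using assms unfolding real_analytic_at_def by blast
  define g where "g w = (\<Sum>n. complex_of_real (c n) * (w - of_real x) ^ n)" for w
  have sm: "(\<lambda>n. complex_of_real (c n) * (w - of_real x) ^ n) sums g w" if w: "w \<in> ball (of_real x) r" for w
  proof -
    define \<rho> where "\<rho> = (norm (w - of_real x) + r) / 2"
    have lt: "norm (w - of_real x) < \<rho>" "\<rho> < r" using w by (auto simp: \<rho>_def dist_norm norm_minus_commute)
    have "\<bar>(x + \<rho>) - x\<bar> < r" 
    proof -
      have "\<rho> > 0" using lt(1) norm_ge_zero[of "w - of_real x"] by linarith
      then show ?thesis using lt(2) by simp
    qed
    from c[OF this] have "summable (\<lambda>n. c n * \<rho> ^ n)" by (simp add: sums_iff)
    then have "summable (\<lambda>n. complex_of_real (c n * \<rho> ^ n))"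
      using summable_of_real by blast
    then have "summable (\<lambda>n. complex_of_real (c n) * (complex_of_real \<rho>) ^ n)" by simp
    from powser_inside[OF this, of "w - of_real x"] lt
    have "summable (\<lambda>n. complex_of_real (c n) * (w - of_real x) ^ n)" by simp
    then show ?thesis unfolding g_def by (simp add: summable_sums)
  qed
  have hol: "g holomorphic_on ball (of_real x) r"
    by (rule power_series_holomorphic) (use sm in auto)
  have "g (of_real y) = of_real (f y)" if "\<bar>y - x\<bar> < r" for y
  proof -
    have "(\<lambda>n. complex_of_real (c n * (y - x) ^ n)) sums of_real (f y)"
      using c[OF that] by (subst sums_of_real_iff)
    moreover have "(\<lambda>n. complex_of_real (c n * (y - x) ^ n)) sums g (of_real y)"
      using sm[of "of_real y"] that by (simp add: dist_norm) (metis of_real_diff norm_of_real abs_minus_commute)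
    ultimately show ?thesis using sums_unique2 by blast
  qed
  then show ?thesis unfolding hext_def using r hol by blast
qed

lemma hext_deriv_aux:
  assumes hol: "g holomorphic_on ball (complex_of_real x) r"
    and ext: "\<And>y. \<bar>y - x\<bar> < r \<Longrightarrow> g (of_real y) = of_real (f y)"
    and y: "\<bar>y - x\<bar> < r"
  shows "(f has_real_derivative Re (deriv g (of_real y))) (at y)"
    and "deriv g (of_real y) = of_real (Re (deriv g (of_real y)))"
proof -
  have yin: "complex_of_real y \<in> ball (of_real x) r" using y by (simp add: dist_norm) (metis of_real_diff norm_of_real abs_minus_commute)
  have d: "(g has_field_derivative deriv g (of_real y)) (at (of_real y))"
    using holomorphic_derivI[OF hol open_ball yin] by simp
  have vd: "((\<lambda>t. g (of_real t)) has_vector_derivative deriv g (of_real y)) (at y)"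
    using has_vector_derivative_real_field[OF d] by simp
  have re: "((\<lambda>t. Re (g (of_real t))) has_real_derivative Re (deriv g (of_real y))) (at y)"
    using has_field_derivative_Re[OF vd] .
  have im: "((\<lambda>t. Im (g (of_real t))) has_real_derivative Im (deriv g (of_real y))) (at y)"
    using has_field_derivative_Im[OF vd] .
  have yS: "y \<in> ball x r" using y by (simp add: dist_norm abs_minus_commute)
  have eqS: "\<And>t. t \<in> ball x r \<Longrightarrow> Re (g (of_real t)) = f t"
    using ext by (simp add: dist_norm abs_minus_commute)
  have eqS0: "\<And>t. t \<in> ball x r \<Longrightarrow> Im (g (of_real t)) = 0"
    using ext by (simp add: dist_norm abs_minus_commute)
  show "(f has_real_derivative Re (deriv g (of_real y))) (at y)"
    using has_field_derivative_transform_within_open[OF re open_ball yS eqS] .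
  have "((\<lambda>t. 0::real) has_real_derivative Im (deriv g (of_real y))) (at y)"
    using has_field_derivative_transform_within_open[OF im open_ball yS eqS0] .
  then have "Im (deriv g (of_real y)) = 0"
    using DERIV_unique DERIV_const by blast
  then show "deriv g (of_real y) = of_real (Re (deriv g (of_real y)))"
    by (simp add: complex_eq_iff)
qed

lemma hext_higher:
  assumes hol: "g holomorphic_on ball (complex_of_real x) r"
    and ext: "\<And>y. \<bar>y - x\<bar> < r \<Longrightarrow> g (of_real y) = of_real (f y)"
  shows "\<bar>y - x\<bar> < r \<Longrightarrow> (deriv ^^ n) g (of_real y) = of_real ((deriv ^^ n) f y)"
proof (induction n arbitrary: y)
  case 0
  then show ?case using ext by simp
next
  case (Suc n)
  have hn: "(deriv ^^ n) g holomorphic_on ball (of_real x) r"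
    by (rule holomorphic_higher_deriv[OF hol open_ball])
  have d: "((deriv ^^ n) f has_real_derivative Re (deriv ((deriv ^^ n) g) (of_real y))) (at y)"
    and e: "deriv ((deriv ^^ n) g) (of_real y) = of_real (Re (deriv ((deriv ^^ n) g) (of_real y)))"
    using hext_deriv_aux[OF hn Suc.IH Suc.prems] by blast+
  show ?case using DERIV_imp_deriv[OF d] e by simp
qed

lemma hextE:
  assumes "hext f x"
  obtains r g where "r > 0" "g holomorphic_on ball (complex_of_real x) r"
    "\<And>y. \<bar>y - x\<bar> < r \<Longrightarrow> g (of_real y) = of_real (f y)"
  using assms unfolding hext_def by blast

lemma hext_DERIV:
  assumes "hext f x"
  shows "(f has_real_derivative deriv f x) (at x)"
proof -
  obtain r g where "r > 0" "g holomorphic_on ball (complex_of_real x) r"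
    "\<And>y. \<bar>y - x\<bar> < r \<Longrightarrow> g (of_real y) = of_real (f y)"
    using hextE[OF assms] by blast
  from hext_deriv_aux(1)[OF this(2,3), of x] \<open>r > 0\<close> show ?thesis
    by (metis DERIV_imp_deriv abs_0 diff_self)
qed

lemma hext_isCont: "hext f x \<Longrightarrow> isCont f x"
  using hext_DERIV DERIV_isCont by blast

lemma hext_deriv:
  assumes "hext f x"
  shows "hext (deriv f) x"
proof -
  obtain r g where r: "r > 0" and hol: "g holomorphic_on ball (complex_of_real x) r"
    and ext: "\<And>y. \<bar>y - x\<bar> < r \<Longrightarrow> g (of_real y) = of_real (f y)"
    using hextE[OF assms] by blast
  have "(deriv ^^ 1) g (of_real y) = of_real ((deriv ^^ 1) f y)" if "\<bar>y - x\<bar> < r" for y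
    using hext_higher[OF hol ext that] .
  moreover have "deriv g holomorphic_on ball (complex_of_real x) r"
    using holomorphic_deriv[OF hol open_ball] .
  ultimately show ?thesis unfolding hext_def using r by auto
qed


lemma UM_hext: "UM V \<Longrightarrow> hext V y"
  unfolding UM_def real_analytic_on_def using ra_imp_hext by blast

lemma UM_DERIV: "UM V \<Longrightarrow> (V has_real_derivative deriv V y) (at y)"
  using UM_hext hext_DERIV by blast

lemma UM_cont: "UM V \<Longrightarrow> continuous_on A V"
  using UM_DERIV DERIV_continuous_on has_field_derivative_at_within by blast

lemma UM_incr:
  assumes "UM V" "0 \<le> a" "a < b" shows "V a < V b"
proof (rule DERIV_pos_imp_increasing_open[OF \<open>a < b\<close> _ UM_cont[OF assms(1)]])
  fix x assume "a < x" "x < b"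
  then have "x * deriv V x > 0" "x > 0" using assms unfolding UM_def by auto
  then show "\<exists>y. DERIV V x :> y \<and> 0 < y"
  proof -
    have "deriv V x > 0" using \<open>x * deriv V x > 0\<close> \<open>x > 0\<close> zero_less_mult_pos by blast
    then show ?thesis using UM_DERIV[OF assms(1)] by blast
  qed
qed

lemma UM_decr:
  assumes "UM V" "a < b" "b \<le> 0" shows "V a > V b"
proof (rule DERIV_neg_imp_decreasing_open[OF \<open>a < b\<close> _ UM_cont[OF assms(1)]])
  fix x assume "a < x" "x < b"
  then have "x * deriv V x > 0" "x < 0" using assms unfolding UM_def by auto
  then show "\<exists>y. DERIV V x :> y \<and> y < 0"
  proof -
    have "deriv V x < 0" using \<open>x * deriv V x > 0\<close> \<open>x < 0\<close>
      by (auto simp: zero_less_mult_iff)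
    then show ?thesis using UM_DERIV[OF assms(1)] by blast
  qed
qed

lemma UM_pos: assumes "UM V" "y \<noteq> 0" shows "V y > 0"
proof -
  have "V 0 = 0" using assms unfolding UM_def by auto
  then show ?thesis
    using UM_incr[OF assms(1), of 0 y] UM_decr[OF assms(1), of y 0] assms(2) by linarith
qed

lemma Vstar_sq: assumes "UM V" shows "(Vstar V y)^2 = V y"
proof (cases "y = 0")
  case True
  then show ?thesis using assms unfolding UM_def by (simp add: Vstar_def)
next
  case False
  have "V y \<ge> 0" using assms unfolding UM_def by blast
  then show ?thesis using False by (simp add: Vstar_def power_mult_distrib sgn_if)
qed


lemma Vs_nz_deriv:
  assumes "UM V" "y \<noteq> 0"
  shows "\<exists>d>0. (Vstar V has_real_derivative d) (at y)"
proof -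
  have Vy: "V y > 0" using UM_pos assms by blast
  have d1: "((\<lambda>t. sgn y * sqrt (V t)) has_real_derivative sgn y * (inverse (sqrt (V y)) / 2 * deriv V y)) (at y)"
    by (intro DERIV_cmult DERIV_chain2[OF DERIV_real_sqrt[OF Vy] UM_DERIV[OF assms(1)]])
  have yS: "y \<in> ball y \<bar>y\<bar>" using assms by simp
  have eq: "\<And>t. t \<in> ball y \<bar>y\<bar> \<Longrightarrow> sgn y * sqrt (V t) = Vstar V t"
    unfolding Vstar_def by (auto simp: dist_real_def sgn_if split: if_splits)
  have d2: "(Vstar V has_real_derivative sgn y * (inverse (sqrt (V y)) / 2 * deriv V y)) (at y)"
    using has_field_derivative_transform_within_open[OF d1 open_ball yS eq] .
  have "y * deriv V y > 0" using assms unfolding UM_def by auto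
  then have "sgn y * deriv V y > 0" using assms(2)
    by (cases "y > 0") (auto simp: zero_less_mult_iff)
  moreover have "inverse (sqrt (V y)) / 2 > 0" using Vy by simp
  ultimately have "sgn y * (inverse (sqrt (V y)) / 2 * deriv V y) > 0"
    by (metis mult.assoc mult.commute mult_pos_pos)
  then show ?thesis using d2 by blast
qed

lemma Vs_nz_hext:
  assumes "UM V" "y \<noteq> 0"
  shows "hext (Vstar V) y"
proof -
  have Vy: "V y > 0" using UM_pos assms by blast
  obtain r g where r: "r > 0" and hol: "g holomorphic_on ball (complex_of_real y) r"
    and ext: "\<And>t. \<bar>t - y\<bar> < r \<Longrightarrow> g (of_real t) = of_real (V t)"
    using hextE[OF UM_hext[OF assms(1)]] by blast
  have "continuous_on (ball (complex_of_real y) r) g"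
    using hol holomorphic_on_imp_continuous_on by blast
  then have "isCont g (of_real y)"
    by (metis centre_in_ball continuous_on_eq_continuous_at open_ball r)
  then obtain \<delta> where \<delta>: "\<delta> > 0" "\<And>z. dist z (of_real y) < \<delta> \<Longrightarrow> dist (g z) (g (of_real y)) < V y"
    using Vy unfolding continuous_at_eps_delta by blast
  define r' where "r' = min r (min \<delta> \<bar>y\<bar>)"
  have r': "r' > 0" using r \<delta> assms by (simp add: r'_def)
  have gy: "g (of_real y) = of_real (V y)" using ext r by simp
  have repos: "Re (g z) > 0" if "z \<in> ball (of_real y) r'" for z
  proof -
    have "dist (g z) (of_real (V y)) < V y"
      using \<delta>(2)[of z] that gy by (simp add: r'_def dist_commute)
    then have "\<bar>Re (g z) - V y\<bar> < V y"
      by (metis abs_Re_le_cmod dist_norm le_less_trans minus_complex.simps(1) of_real_Re of_real_def Re_complex_of_real)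
    then show ?thesis by linarith
  qed
  define G where "G z = complex_of_real (sgn y) * csqrt (g z)" for z
  have hol': "G holomorphic_on ball (of_real y) r'"
  proof -
    have "ball (complex_of_real y) r' \<subseteq> ball (complex_of_real y) r" by (rule subset_ball) (simp add: r'_def)
    then have h1: "g holomorphic_on ball (complex_of_real y) r'" using holomorphic_on_subset hol by blast
    have h2: "g z \<notin> \<real>\<^sub>\<le>\<^sub>0" if "z \<in> ball (complex_of_real y) r'" for z
      using repos[OF that] by (simp add: complex_nonpos_Reals_iff)
    show ?thesis unfolding G_def by (intro holomorphic_intros h1 h2)
  qed
  have "G (of_real t) = of_real (Vstar V t)" if "\<bar>t - y\<bar> < r'" for t
  proof -
    have "sgn t = sgn y" using that by (auto simp: r'_def sgn_if)
    moreover have "V t \<ge> 0" using assms(1) unfolding UM_def by blast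
    ultimately show ?thesis using ext[of t] that by (simp add: G_def Vstar_def r'_def)
  qed
  then show ?thesis unfolding hext_def using r' hol' by blast
qed


lemma Vs_zero:
  assumes UM: "UM V" and deg: "deg0 V = 2"
  shows "hext (Vstar V) 0 \<and> (\<exists>d>0. (Vstar V has_real_derivative d) (at 0))"
proof -
  obtain r g where r: "r > 0" and hol0: "g holomorphic_on ball (complex_of_real 0) r"
    and ext0: "\<And>t. \<bar>t - 0\<bar> < r \<Longrightarrow> g (of_real t) = of_real (V t)"
    using hextE[OF UM_hext[OF UM, of 0]] by blast
  have hol: "g holomorphic_on ball 0 r" using hol0 by simp
  have ext: "\<And>t. \<bar>t\<bar> < r \<Longrightarrow> g (of_real t) = of_real (V t)" using ext0 by simp
  have hd: "(deriv ^^ n) g (of_real t) = of_real ((deriv ^^ n) V t)" if "\<bar>t\<bar> < r" for n t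
  proof -
    have "\<bar>t - 0\<bar> < r" using that by simp
    from hext_higher[OF hol0 ext0 this] show ?thesis .
  qed
  define a where "a n = (deriv ^^ n) g 0 / fact n" for n
  have ser: "(\<lambda>n. a n * z ^ n) sums g z" if "z \<in> ball 0 r" for z
    using holomorphic_power_series[OF hol that] by (simp add: a_def)
  have a_eq: "a n = of_real ((deriv ^^ n) V 0 / fact n)" for n
    using hd[of 0 n] r by (simp add: a_def)
  have ex: "\<exists>m. (deriv ^^ m) V 0 \<noteq> 0"
  proof (rule ccontr)
    assume "\<not> ?thesis"
    then have "\<And>n. a n = 0" by (simp add: a_eq)
    then have "g (of_real (r/2)) = 0" using ser[of "of_real (r/2)"] r
      by (simp add: sums_iff)
    moreover have "V (r/2) > 0" using UM_pos[OF UM] r by simp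
    ultimately show False using ext[of "r/2"] r by simp
  qed
  have L: "(deriv ^^ (LEAST m. (deriv ^^ m) V 0 \<noteq> 0)) V 0 \<noteq> 0" by (rule LeastI_ex[OF ex])
  then have d2: "(deriv ^^ 2) V 0 \<noteq> 0" using deg unfolding deg0_def by simp
  have dl: "(deriv ^^ m) V 0 = 0" if "m < 2" for m
  proof -
    have "m < (LEAST m. (deriv ^^ m) V 0 \<noteq> 0)" using that deg unfolding deg0_def by simp
    from not_less_Least[OF this] show ?thesis by simp
  qed
  have a0: "a 0 = 0" and a1: "a 1 = 0" using dl[of 0] dl[of 1] by (simp_all add: a_eq)
  define h where "h z = (if z = 0 then a 2 else g z / z^2)" for z
  have hser: "(\<lambda>n. a (n+2) * (z - 0) ^ n) sums h z" if "z \<in> ball 0 r" for z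
  proof (cases "z = 0")
    case True
    then show ?thesis using powser_sums_zero[of "\<lambda>n. a (n+2)"] by (simp add: h_def numeral_2_eq_2)
  next
    case False
    have "(\<lambda>n. a n * z ^ n) sums g z" using ser[OF that] .
    then have s1: "(\<lambda>n. a (Suc n) * z ^ (Suc n)) sums g z"
      using iffD2[OF sums_Suc_iff[of "\<lambda>n. a n * z^n" "g z"]] a0 by (simp del: power_Suc)
    then have "(\<lambda>n. a (Suc (Suc n)) * z ^ (Suc (Suc n))) sums g z"
      using iffD2[OF sums_Suc_iff[of "\<lambda>n. a (Suc n) * z^(Suc n)" "g z"]] a1 by (simp del: power_Suc)
    then have "(\<lambda>n. a (Suc (Suc n)) * z ^ (Suc (Suc n)) / z^2) sums (g z / z^2)"
      by (rule sums_divide)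
    moreover have "a (Suc (Suc n)) * z ^ (Suc (Suc n)) / z^2 = a (n+2) * (z - 0) ^ n" for n
      using False by (simp add: power2_eq_square)
    ultimately show ?thesis using False by (simp add: h_def)
  qed
  have holh: "h holomorphic_on ball 0 r"
    using power_series_holomorphic[of 0 r "\<lambda>n. a (n+2)" h] hser by blast
  have h_real: "h (of_real t) = of_real (V t / t^2)" if "\<bar>t\<bar> < r" "t \<noteq> 0" for t
    using ext[OF that(1)] that(2) by (simp add: h_def)
  have h0: "h 0 = of_real ((deriv ^^ 2) V 0 / 2)" by (simp add: h_def a_eq)
  have conth: "isCont h 0"
    by (metis centre_in_ball continuous_on_eq_continuous_at holh holomorphic_on_imp_continuous_on open_ball r)
  have lim: "((\<lambda>t. Re (h (of_real t))) \<longlongrightarrow> Re (h 0)) (at_right 0)"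
  proof -
    have "((\<lambda>t::real. complex_of_real t) \<longlongrightarrow> 0) (at_right 0)"
      using tendsto_of_real[OF tendsto_ident_at[of "0::real" "{0<..}"]] by simp
    from isCont_tendsto_compose[OF conth this] show ?thesis by (rule tendsto_Re)
  qed
  have ev: "eventually (\<lambda>t. 0 \<le> Re (h (of_real t))) (at_right 0)"
  proof -
    have "eventually (\<lambda>t::real. t \<in> {0<..<r}) (at_right 0)" using r by (rule eventually_at_right_real)
    then show ?thesis
    proof eventually_elim
      case (elim t)
      then have "V t \<ge> 0" using UM unfolding UM_def by blast
      then show ?case using h_real[of t] elim by auto
    qed
  qed
  have "Re (h 0) \<ge> 0" using tendsto_lowerbound[OF lim ev] by simp
  moreover have Reh: "Re (h 0) = (deriv ^^ 2) V 0 / 2" by (simp only: h0 Re_complex_of_real)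
  then have "Re (h 0) \<noteq> 0" using d2 by simp
  ultimately have Reh0: "Re (h 0) > 0" by simp
  have h0r: "h 0 = of_real (Re (h 0))" by (simp only: h0 Re_complex_of_real)
  obtain \<delta> where \<delta>: "\<delta> > 0" "\<And>z. dist z 0 < \<delta> \<Longrightarrow> dist (h z) (h 0) < Re (h 0)"
    using conth Reh0 unfolding continuous_at_eps_delta by blast
  define r' where "r' = min r \<delta>"
  have r': "r' > 0" using r \<delta> by (simp add: r'_def)
  have repos: "Re (h z) > 0" if "z \<in> ball 0 r'" for z
  proof -
    have "dist (h z) (h 0) < Re (h 0)" using \<delta>(2)[of z] that by (simp add: r'_def dist_commute)
    then have "\<bar>Re (h z) - Re (h 0)\<bar> < Re (h 0)"
      by (metis abs_Re_le_cmod dist_norm le_less_trans minus_complex.simps(1))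
    then show ?thesis by linarith
  qed
  define G where "G z = z * csqrt (h z)" for z
  have "ball (0::complex) r' \<subseteq> ball 0 r" by (rule subset_ball) (simp add: r'_def)
  then have h1: "h holomorphic_on ball 0 r'" using holomorphic_on_subset holh by blast
  have h2: "h z \<notin> \<real>\<^sub>\<le>\<^sub>0" if "z \<in> ball 0 r'" for z
    using repos[OF that] by (simp add: complex_nonpos_Reals_iff)
  have holq: "(\<lambda>z. csqrt (h z)) holomorphic_on ball 0 r'" by (intro holomorphic_intros h1 h2)
  have holG: "G holomorphic_on ball 0 r'"
    unfolding G_def by (intro holomorphic_intros holq)
  have extG: "G (of_real t) = of_real (Vstar V t)" if "\<bar>t - 0\<bar> < r'" for t
  proof (cases "t = 0")
    case True
    then show ?thesis by (simp add: G_def Vstar_def)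
  next
    case False
    have "V t \<ge> 0" using UM unfolding UM_def by blast
    then have "csqrt (h (of_real t)) = of_real (sqrt (V t / t^2))"
      using h_real[of t] that False by (simp add: r'_def)
    moreover have "t * sqrt (V t / t^2) = sgn t * sqrt (V t)"
      using False by (simp add: real_sqrt_divide sgn_if)
    ultimately show ?thesis by (simp add: G_def Vstar_def flip: of_real_mult)
  qed
  have hextVs: "hext (Vstar V) 0" unfolding hext_def using r' holG extG by force
  have qd: "((\<lambda>z. csqrt (h z)) has_field_derivative deriv (\<lambda>z. csqrt (h z)) 0) (at 0)"
    using holomorphic_derivI[OF holq open_ball, of 0 UNIV] r' by simp
  have "(G has_field_derivative (0 * deriv (\<lambda>z. csqrt (h z)) 0 + 1 * csqrt (h 0))) (at 0)"
    unfolding G_def using DERIV_mult'[OF DERIV_ident qd] by simp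
  then have dG: "deriv G 0 = csqrt (h 0)" using DERIV_imp_deriv by simp
  have "(Vstar V has_real_derivative Re (deriv G (of_real 0))) (at 0)"
    using hext_deriv_aux(1)[of G 0 r' "Vstar V" 0] holG extG r' by simp
  moreover have "Re (deriv G (of_real 0)) > 0"
  proof -
    have "csqrt (h 0) = of_real (sqrt (Re (h 0)))" using Reh0 by (subst h0r) simp
    then show ?thesis using dG Reh0 by simp
  qed
  ultimately show ?thesis using hextVs by blast
qed


lemma ball_of_real_iff: "(complex_of_real a \<in> ball (complex_of_real b) r) = (\<bar>a - b\<bar> < r)"
  by (simp add: dist_of_real dist_real_def abs_minus_commute)

locale vsetup =
  fixes V :: "real \<Rightarrow> real"
  assumes UM: "UM V" and deg: "deg0 V = 2"
begin

abbreviation "Vs \<equiv> Vstar V"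
abbreviation "W \<equiv> Wfun V"

lemma Vs_hext: "hext Vs y"
  using Vs_zero[OF UM deg] Vs_nz_hext[OF UM] by (cases "y = 0") auto

lemma Vs_der: "\<exists>d>0. (Vs has_real_derivative d) (at y)"
  using Vs_zero[OF UM deg] Vs_nz_deriv[OF UM] by (cases "y = 0") auto

lemma Vs_deriv_pos: "deriv Vs y > 0" and Vs_DERIV: "(Vs has_real_derivative deriv Vs y) (at y)"
  using Vs_der[of y] DERIV_imp_deriv by auto

lemma Vs_cont: "continuous_on A Vs"
  using Vs_DERIV DERIV_continuous_on has_field_derivative_at_within by blast

lemma Vs_mono: "a < b \<Longrightarrow> Vs a < Vs b"
  using DERIV_pos_imp_increasing[of a b Vs] Vs_der by blast

lemma Vs_inj: "inj Vs"
proof (rule injI)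
  fix a b assume "Vs a = Vs b"
  then show "a = b" using Vs_mono[of a b] Vs_mono[of b a] by (cases a b rule: linorder_cases) auto
qed

lemma Vs_0: "Vs 0 = 0" by (simp add: Vstar_def)

lemma Vs_surj: "surj Vs"
proof -
  have "\<exists>y. Vs y = x" for x
  proof -
    have at: "eventually (\<lambda>y. x^2 \<le> V y) at_top" using UM unfolding UM_def filterlim_at_top by blast
    then obtain N where N: "\<And>y. y \<ge> N \<Longrightarrow> x^2 \<le> V y" unfolding eventually_at_top_linorder by blast
    have ab: "eventually (\<lambda>y. x^2 \<le> V y) at_bot" using UM unfolding UM_def filterlim_at_top by blast
    then obtain M where M: "\<And>y. y \<le> M \<Longrightarrow> x^2 \<le> V y" unfolding eventually_at_bot_linorder by blast
    define b where "b = max N 1"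
    define a where "a = min M (-1)"
    have "Vs b = sqrt (V b)" using b_def by (simp add: Vstar_def)
    moreover have "sqrt (x^2) \<le> sqrt (V b)" by (rule real_sqrt_le_mono) (use N b_def in auto)
    ultimately have "x \<le> Vs b" by simp
    have "Vs a = - sqrt (V a)" using a_def by (simp add: Vstar_def)
    moreover have "sqrt (x^2) \<le> sqrt (V a)" by (rule real_sqrt_le_mono) (use M a_def in auto)
    ultimately have "Vs a \<le> x" by simp
    have "a \<le> b" using a_def b_def by simp
    from IVT'[OF \<open>Vs a \<le> x\<close> \<open>x \<le> Vs b\<close> this Vs_cont] show ?thesis by blast
  qed
  then show ?thesis unfolding surj_def by (metis)
qed

lemma Vs_bij: "bij Vs" using Vs_inj Vs_surj by (simp add: bij_def)

lemma Vs_W: "Vs (W x) = x"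
  unfolding Wfun_def using Vs_surj by (simp add: surj_f_inv_f)

lemma W_Vs: "W (Vs y) = y"
  unfolding Wfun_def using Vs_inj by (simp add: inv_f_f)

lemma W_0: "W 0 = 0" using W_Vs[of 0] Vs_0 by simp

lemma W_cont: "isCont W x"
proof -
  have "isCont W (Vs (W x))"
    by (rule isCont_inverse_function[where d=1 and x="W x" and f=Vs and g=W])
       (auto simp: W_Vs intro: DERIV_isCont[OF Vs_DERIV])
  then show ?thesis by (simp add: Vs_W)
qed

lemma W_DERIV: "(W has_real_derivative inverse (deriv Vs (W x))) (at x)"
  by (rule DERIV_inverse_function[where f=Vs and g=W and a="x - 1" and b="x + 1"])
     (use Vs_DERIV Vs_deriv_pos[of "W x"] Vs_W W_cont in auto)

lemma W_deriv: "deriv W x = inverse (deriv Vs (W x))"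
  using W_DERIV DERIV_imp_deriv by blast

lemma W_deriv_pos: "deriv W x > 0"
  using W_deriv Vs_deriv_pos by simp

lemma V_W: "V (W x) = x^2"
  using Vstar_sq[OF UM, of "W x"] Vs_W by simp

lemma W_hext: "hext W x"
proof -
  define y where "y = W x"
  obtain r G where r: "r > 0" and holG: "G holomorphic_on ball (complex_of_real y) r"
    and extG: "\<And>t. \<bar>t - y\<bar> < r \<Longrightarrow> G (of_real t) = of_real (Vs t)"
    using hextE[OF Vs_hext[of y]] by blast
  have yy: "\<bar>y - y\<bar> < r" using r by simp
  have dG: "deriv G (of_real y) = of_real (Re (deriv G (of_real y)))"
    and dV: "(Vs has_real_derivative Re (deriv G (of_real y))) (at y)"
    using hext_deriv_aux[OF holG extG yy] by blast+
  have "Re (deriv G (of_real y)) = deriv Vs y" using DERIV_unique[OF dV Vs_DERIV] .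
  then have dnz: "deriv G (of_real y) \<noteq> 0" using dG Vs_deriv_pos[of y] by auto
  obtain r1 where r1: "r1 > 0" "ball (complex_of_real y) r1 \<subseteq> ball (complex_of_real y) r"
    and inj: "inj_on G (ball (complex_of_real y) r1)"
    using has_complex_derivative_locally_injective[OF holG centre_in_ball[THEN iffD2, OF r] open_ball dnz]
    by blast
  have hol1: "G holomorphic_on ball (complex_of_real y) r1" using holomorphic_on_subset[OF holG r1(2)] .
  define T where "T = G ` ball (complex_of_real y) r1"
  have openT: "open T" unfolding T_def using open_mapping_thm3[OF hol1 open_ball inj] .
  have "\<exists>g. g holomorphic_on G ` ball (complex_of_real y) r1 \<and>
      (\<forall>z \<in> ball (complex_of_real y) r1. g (G z) = z)"
  proof (rule holomorphic_has_inverse[OF hol1 open_ball inj])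
    fix g assume "g holomorphic_on G ` ball (complex_of_real y) r1"
      "\<And>z. z \<in> ball (complex_of_real y) r1 \<Longrightarrow> deriv G z * deriv g (G z) = 1"
      "\<And>z. z \<in> ball (complex_of_real y) r1 \<Longrightarrow> g (G z) = z"
    then show ?thesis by blast
  qed
  then obtain g where holg0: "g holomorphic_on G ` ball (complex_of_real y) r1"
    and gG: "\<And>z. z \<in> ball (complex_of_real y) r1 \<Longrightarrow> g (G z) = z" by blast
  have holg: "g holomorphic_on T" using holg0 by (simp add: T_def)
  have Gy: "G (of_real y) = of_real x" using extG[OF yy] by (simp add: y_def Vs_W)
  have yin: "complex_of_real y \<in> ball (complex_of_real y) r1" using r1(1) by simp
  have xT: "complex_of_real x \<in> T" unfolding T_def using imageI[OF yin, of G] by (simp only: Gy)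
  obtain \<rho>1 where \<rho>1: "\<rho>1 > 0" "ball (complex_of_real x) \<rho>1 \<subseteq> T"
    using openT xT open_contains_ball by blast
  obtain \<rho>2 where \<rho>2: "\<rho>2 > 0" "\<And>x'. dist x' x < \<rho>2 \<Longrightarrow> dist (W x') (W x) < r1"
    using W_cont[of x] r1(1) unfolding continuous_at_eps_delta by blast
  define \<rho> where "\<rho> = min \<rho>1 \<rho>2"
  have \<rho>: "\<rho> > 0" using \<rho>1 \<rho>2 by (simp add: \<rho>_def)
  have "ball (complex_of_real x) \<rho> \<subseteq> T" using \<rho>1 subset_ball[of \<rho> \<rho>1] by (auto simp: \<rho>_def)
  then have holg': "g holomorphic_on ball (complex_of_real x) \<rho>" using holomorphic_on_subset holg by blast
  have "g (of_real x') = of_real (W x')" if "\<bar>x' - x\<bar> < \<rho>" for x'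
  proof -
    have d: "\<bar>W x' - y\<bar> < r1" using \<rho>2(2)[of x'] that by (simp add: \<rho>_def dist_real_def y_def)
    have zin: "complex_of_real (W x') \<in> ball (complex_of_real y) r1"
      using d by (simp only: ball_of_real_iff)
    have "complex_of_real (W x') \<in> ball (complex_of_real y) r" using r1(2) zin by blast
    then have "\<bar>W x' - y\<bar> < r" by (simp only: ball_of_real_iff)
    then have "G (of_real (W x')) = of_real x'" using extG by (simp add: Vs_W)
    then show ?thesis using gG[OF zin] by simp
  qed
  then show ?thesis unfolding hext_def using \<rho> holg' by blast
qed

lemma W'_hext: "hext (deriv W) x"
  using hext_deriv[OF W_hext] .

lemma W'_cont: "isCont (deriv W) x"
  using hext_isCont[OF W'_hext] .

end


lemma afun_subst:
  fixes Q w w' :: "real \<Rightarrow> real" and \<theta> :: real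
  assumes \<theta>: "\<theta> > 0"
    and w0: "w 0 = 0"
    and wd: "\<And>x. (w has_real_derivative w' x) (at x)"
    and w'c: "\<And>x. isCont w' x"
    and w'pos: "\<And>x. w' x \<ge> 0"
    and Qw: "\<And>x. 0 \<le> x \<Longrightarrow> x \<le> sqrt \<theta> \<Longrightarrow> Q (w x) = x^2"
    and Qm[measurable]: "Q \<in> borel_measurable borel"
    and Vi: "Vinv Q \<theta> = w (sqrt \<theta>)"
  shows "afun Q \<theta> = integral {0..pi/2} (\<lambda>\<phi>. w' (sqrt \<theta> * sin \<phi>)) / sqrt 2"
proof -
  define s where "s = sqrt \<theta>"
  have s: "s > 0" using \<theta> by (simp add: s_def)
  have ss: "s^2 = \<theta>" using \<theta> by (simp add: s_def)
  define g where "g \<phi> = w (s * sin \<phi>)" for \<phi>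
  define g' where "g' \<phi> = w' (s * sin \<phi>) * (s * cos \<phi>)" for \<phi>
  define F where "F y = 1 / (sqrt 2 * sqrt (\<theta> - Q y))" for y
  define I where "I = integral {0..pi/2} (\<lambda>\<phi>. w' (s * sin \<phi>) / sqrt 2)"
  have derivg: "(g has_real_derivative g' \<phi>) (at \<phi>)" for \<phi>
  proof -
    have "((\<lambda>\<phi>. s * sin \<phi>) has_real_derivative s * cos \<phi>) (at \<phi>)"
      by (auto intro!: derivative_eq_intros)
    from DERIV_chain2[OF wd this] show ?thesis unfolding g_def[abs_def] g'_def by simp
  qed
  have cw': "isCont (\<lambda>\<phi>. w' (s * sin \<phi>)) \<phi>" for \<phi>
  proof -
    have "isCont (\<lambda>\<phi>. s * sin \<phi>) \<phi>" by (intro continuous_intros)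
    from isCont_o2[OF this w'c] show ?thesis .
  qed
  have ci: "continuous_on {0..pi/2} (\<lambda>\<phi>. w' (s * sin \<phi>) / sqrt 2)"
    by (intro continuous_at_imp_continuous_on ballI continuous_intros cw') simp
  have contg': "continuous_on {0..pi/2} g'"
    unfolding g'_def
    by (intro continuous_at_imp_continuous_on ballI continuous_intros cw')
  have g'nn: "g' \<phi> \<ge> 0" if "\<phi> \<in> {0..pi/2}" for \<phi>
    using that w'pos s cos_ge_zero[of \<phi>] by (simp add: g'_def)
  have Fm[measurable]: "F \<in> borel_measurable borel" unfolding F_def by measurable
  have sub: "(\<integral>\<^sup>+x. F x * indicator {g 0..g (pi/2)} x \<partial>lborel) =
             (\<integral>\<^sup>+x. F (g x) * g' x * indicator {0..pi/2} x \<partial>lborel)"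
    by (rule nn_integral_substitution[OF _ derivg contg' g'nn]) (auto simp: set_borel_measurable_def)
  have g0: "g 0 = 0" by (simp add: g_def w0)
  have gpi: "g (pi/2) = w s" by (simp add: g_def)
  have pt: "F (g \<phi>) * g' \<phi> * indicator {0..pi/2} \<phi> = w' (s * sin \<phi>) / sqrt 2 * indicator {0..pi/2} \<phi>"
    if "\<phi> \<noteq> pi/2" for \<phi>
  proof (cases "\<phi> \<in> {0..pi/2}")
    case True
    then have c: "cos \<phi> > 0" using that by (intro cos_gt_zero_pi) auto
    have sn: "0 \<le> s * sin \<phi>" "s * sin \<phi> \<le> s"
      using True s sin_ge_zero[of \<phi>] sin_le_one[of \<phi>] by (auto simp: mult_le_cancel_left1)
    have "Q (g \<phi>) = (s * sin \<phi>)^2" using Qw[OF sn(1)] sn(2) by (simp add: g_def s_def)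
    then have "\<theta> - Q (g \<phi>) = (s * cos \<phi>)^2"
    proof -
      have e: "\<theta> * (cos \<phi>)^2 + \<theta> * (sin \<phi>)^2 = \<theta>"
        by (metis distrib_left mult.right_neutral sin_cos_squared_add add.commute)
      show ?thesis using ss \<open>Q (g \<phi>) = (s * sin \<phi>)^2\<close> e
        by (simp add: power_mult_distrib)
    qed
    then have "sqrt (\<theta> - Q (g \<phi>)) = s * cos \<phi>" using s c by simp
    then show ?thesis using True s c by (simp add: F_def g'_def field_simps)
  next
    case False
    then show ?thesis by simp
  qed
  have "(\<integral>\<^sup>+x. F (g x) * g' x * indicator {0..pi/2} x \<partial>lborel) =
        (\<integral>\<^sup>+x. w' (s * sin x) / sqrt 2 * indicator {0..pi/2} x \<partial>lborel)"
    by (rule nn_integral_cong_AE) (use AE_lborel_singleton[of "pi/2"] pt in \<open>auto elim!: eventually_mono\<close>)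
  also have "\<dots> = ennreal I"
  proof -
    have "((\<lambda>\<phi>. w' (s * sin \<phi>) / sqrt 2) has_integral I) {0..pi/2}"
      unfolding I_def using integrable_continuous_interval[OF ci] by (simp add: has_integral_integral)
    from nn_integral_has_integral_lebesgue'[OF _ this] w'pos
    have e: "(\<integral>\<^sup>+x. ennreal (w' (s * sin x) / sqrt 2) * indicator {0..pi/2} x \<partial>lborel) = ennreal I"
      by simp
    have "(\<integral>\<^sup>+x. ennreal (w' (s * sin x) / sqrt 2 * indicator {0..pi/2} x) \<partial>lborel)
        = (\<integral>\<^sup>+x. ennreal (w' (s * sin x) / sqrt 2) * indicator {0..pi/2} x \<partial>lborel)"
      by (intro nn_integral_cong) (simp add: indicator_def)
    then show ?thesis using e by simp
  qed
  finally have lhs: "(\<integral>\<^sup>+x. F x * indicator {0..w s} x \<partial>lborel) = ennreal I"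
    using sub g0 gpi by simp
  have Inn: "I \<ge> 0" unfolding I_def
    by (rule integral_nonneg[OF integrable_continuous_interval[OF ci]]) (simp add: w'pos)
  have Fnn: "0 \<le> F x * indicator {0..w s} x" for x
  proof (cases "x \<in> {0..w s}")
    case True
    have "continuous_on {0..s} w"
      using wd DERIV_continuous_on has_field_derivative_at_within by blast
    then obtain t where t: "0 \<le> t" "t \<le> s" "w t = x"
      using IVT'[of w 0 x s] True s w0 by auto
    have "Q x = t^2" using Qw[of t] t by (simp add: s_def)
    moreover have "t^2 \<le> \<theta>" using t ss by (simp add: power_mono flip: ss)
    ultimately show ?thesis using True by (simp add: F_def)
  next
    case False
    then show ?thesis by simp
  qed
  have "((\<lambda>x. F x * indicator {0..w s} x) has_integral I) UNIV"
    by (rule nn_integral_has_integral[OF _ Fnn lhs Inn]) measurable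
  moreover have "(\<lambda>x. F x * indicator {0..w s} x) = (\<lambda>x. if x \<in> {0..w s} then F x else 0)"
    by (auto simp: indicator_def fun_eq_iff)
  ultimately have "(F has_integral I) {0..w s}"
    using has_integral_restrict_UNIV[of "{0..w s}" F I] by simp
  then have "integral {0..w s} F = I" by (rule integral_unique)
  moreover have "afun Q \<theta> = integral {0..w s} F"
    unfolding afun_def Vi F_def[abs_def] s_def ..
  ultimately have "afun Q \<theta> = I" by simp
  then show ?thesis by (simp add: I_def s_def)
qed


definition Cn :: "nat \<Rightarrow> real" where
  "Cn n = integral {0..pi/2} (\<lambda>\<phi>. sin \<phi> ^ n)"

lemma sinpow_cont: "continuous_on A (\<lambda>\<phi>::real. sin \<phi> ^ n)"
proof -
  have "continuous_on A (\<lambda>\<phi>::real. sin \<phi>)" by (rule continuous_on_sin[OF continuous_on_id])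
  from continuous_on_power[OF this] show ?thesis .
qed

lemma Cn_pos: "Cn n > 0"
proof -
  have i1: "(\<lambda>\<phi>. sin \<phi> ^ n) integrable_on {pi/6..pi/2}"
    by (rule integrable_continuous_interval[OF sinpow_cont])
  have i2: "(\<lambda>\<phi>. sin \<phi> ^ n) integrable_on {0..pi/2}"
    by (rule integrable_continuous_interval[OF sinpow_cont])
  have nn: "\<forall>x\<in>{0..pi/2}. 0 \<le> sin x ^ n"
    using sin_ge_zero by (auto intro!: zero_le_power simp: pi_ge_zero)
  have "integral {pi/6..pi/2} (\<lambda>\<phi>. sin \<phi> ^ n) \<le> Cn n"
    unfolding Cn_def by (rule integral_subset_le[OF _ i1 i2 nn]) (auto simp: pi_ge_zero)
  moreover have "integral {pi/6..pi/2} (\<lambda>\<phi>::real. (1/2::real) ^ n) \<le> integral {pi/6..pi/2} (\<lambda>\<phi>. sin \<phi> ^ n)"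
  proof (rule integral_le[OF _ i1])
    show "(\<lambda>\<phi>::real. (1/2::real) ^ n) integrable_on {pi/6..pi/2}"
      by (rule integrable_continuous_interval) (rule continuous_on_const)
    fix x assume x: "x \<in> {pi/6..pi/2}"
    have "sin (pi/6) \<le> sin x"
      using x pi_gt_zero by (subst sin_mono_le_eq) auto
    then have "1/2 \<le> sin x" by (simp add: sin_30)
    then show "(1/2::real) ^ n \<le> sin x ^ n" by (rule power_mono) simp
  qed
  moreover have "integral {pi/6..pi/2} (\<lambda>\<phi>::real. (1/2::real) ^ n) > 0"
    using pi_gt_zero by simp
  ultimately show ?thesis by linarith
qed

lemma series_integral:
  fixes U :: "real \<Rightarrow> real"
  assumes ser: "\<And>x. \<bar>x\<bar> < r \<Longrightarrow> (\<lambda>n. u n * x^n) sums U x" and t: "\<bar>t\<bar> < r"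
  shows "(\<lambda>n. u n * Cn n * t^n) sums integral {0..pi/2} (\<lambda>\<phi>. U (t * sin \<phi>))"
proof -
  define t' where "t' = (\<bar>t\<bar> + r) / 2"
  have t': "\<bar>t\<bar> < t'" "t' < r" using t by (auto simp: t'_def)
  have "summable (\<lambda>n. u n * t'^n)" using ser[of t'] t' by (auto simp: sums_iff)
  from powser_insidea[OF this, of "\<bar>t\<bar>"] t'
  have sumh: "summable (\<lambda>n. \<bar>u n\<bar> * \<bar>t\<bar>^n)" by (simp add: abs_mult power_abs)
  define h where "h = (\<Sum>n. \<bar>u n\<bar> * \<bar>t\<bar>^n)"
  define f where "f k \<phi> = (\<Sum>n<k. u n * (t * sin \<phi>)^n)" for k \<phi>
  have fc: "continuous_on {0..pi/2} (f k)" for k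
    unfolding f_def by (intro continuous_intros)
  have fi: "(f k) integrable_on {0..pi/2}" for k
    by (rule integrable_continuous_interval[OF fc])
  have hi: "(\<lambda>\<phi>. h) integrable_on {0..pi/2}"
    by (rule integrable_continuous_interval) (rule continuous_on_const)
  have le: "norm (f k \<phi>) \<le> h" for k \<phi>
  proof -
    have "norm (f k \<phi>) \<le> (\<Sum>n<k. \<bar>u n * (t * sin \<phi>)^n\<bar>)"
      unfolding f_def real_norm_def by (rule sum_abs)
    also have "\<dots> \<le> (\<Sum>n<k. \<bar>u n\<bar> * \<bar>t\<bar>^n)"
    proof (rule sum_mono)
      fix n
      have "\<bar>t * sin \<phi>\<bar> \<le> \<bar>t\<bar>" using abs_sin_le_one[of \<phi>]
        by (simp add: abs_mult mult_left_le)
      then have "\<bar>t * sin \<phi>\<bar>^n \<le> \<bar>t\<bar>^n" by (rule power_mono) simp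
      then show "\<bar>u n * (t * sin \<phi>)^n\<bar> \<le> \<bar>u n\<bar> * \<bar>t\<bar>^n"
        by (simp add: abs_mult power_abs mult_left_mono)
    qed
    also have "\<dots> \<le> h" unfolding h_def by (rule sum_le_suminf[OF sumh]) auto
    finally show ?thesis .
  qed
  have conv: "(\<lambda>k. f k \<phi>) \<longlonglongrightarrow> U (t * sin \<phi>)" for \<phi>
  proof -
    have "\<bar>t * sin \<phi>\<bar> < r"
    proof -
      have "\<bar>t * sin \<phi>\<bar> \<le> \<bar>t\<bar>" using abs_sin_le_one[of \<phi>]
        by (simp add: abs_mult mult_left_le)
      then show ?thesis using t by linarith
    qed
    from ser[OF this] show ?thesis unfolding f_def sums_def .
  qed
  from dominated_convergence(2)[OF fi hi le conv]
  have lim: "(\<lambda>k. integral {0..pi/2} (f k)) \<longlonglongrightarrow> integral {0..pi/2} (\<lambda>\<phi>. U (t * sin \<phi>))" by simp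
  have "integral {0..pi/2} (f k) = (\<Sum>n<k. u n * Cn n * t^n)" for k
  proof -
    have "integral {0..pi/2} (f k) = (\<Sum>n<k. integral {0..pi/2} (\<lambda>\<phi>. u n * (t * sin \<phi>)^n))"
      unfolding f_def
      by (rule integral_sum) (auto intro!: integrable_continuous_interval continuous_intros)
    also have "\<dots> = (\<Sum>n<k. u n * Cn n * t^n)"
      by (rule sum.cong) (simp_all add: Cn_def power_mult_distrib)
    finally show ?thesis .
  qed
  with lim show ?thesis unfolding sums_def by simp
qed

lemma powser_zero_right:
  fixes d :: "nat \<Rightarrow> real"
  assumes \<delta>: "\<delta> > 0"
    and sm: "\<And>t. \<bar>t\<bar> < \<delta> \<Longrightarrow> summable (\<lambda>n. d n * t^n)"
    and z: "\<And>t. 0 < t \<Longrightarrow> t < \<delta> \<Longrightarrow> (\<Sum>n. d n * t^n) = 0"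
  shows "d m = 0"
proof (induction m rule: less_induct)
  case (less m)
  define P where "P t = (\<Sum>n. d (n + m) * t^n)" for t
  have smm: "(\<lambda>n. d (n + m) * t^n) sums P t" if "norm t < \<delta>" for t
  proof (cases "t = 0")
    case True
    then show ?thesis using powser_sums_zero[of "\<lambda>n. d (n+m)"] by (simp add: P_def)
  next
    case False
    have "summable (\<lambda>n. d (n + m) * t^(n + m))"
      using summable_ignore_initial_segment[OF sm[of t]] that by simp
    then have "summable (\<lambda>n. d (n + m) * t^(n + m) / t^m)" by (rule summable_divide)
    moreover have "d (n + m) * t^(n + m) / t^m = d (n + m) * t^n" for n
      using False by (simp add: power_add)
    ultimately show ?thesis by (simp add: P_def summable_sums)
  qed
  have lim: "(P \<longlongrightarrow> d (0 + m)) (at 0)"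
    using powser_limit_0[OF \<delta> smm] by simp
  have "eventually (\<lambda>t. P t = 0) (at_right 0)"
  proof -
    have "eventually (\<lambda>t::real. t \<in> {0<..<\<delta>}) (at_right 0)" using \<delta> by (rule eventually_at_right_real)
    then show ?thesis
    proof eventually_elim
      case (elim t)
      then have t: "0 < t" "t < \<delta>" by auto
      have s: "summable (\<lambda>n. d n * t^n)" using sm t by simp
      have "(\<Sum>n. d n * t^n) = (\<Sum>n. d (n + m) * t^(n + m)) + (\<Sum>i<m. d i * t^i)"
        by (rule suminf_split_initial_segment[OF s])
      moreover have "(\<Sum>i<m. d i * t^i) = 0" using less by simp
      moreover have "(\<Sum>n. d (n + m) * t^(n + m)) = P t * t^m"
      proof -
        have "(\<lambda>n. d (n + m) * t^n * t^m) sums (P t * t^m)" using sums_mult2[OF smm[of t]] t by simp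
        moreover have "(\<lambda>n. d (n + m) * t^(n + m)) = (\<lambda>n. d (n + m) * t^n * t^m)"
          by (simp add: power_add mult.assoc fun_eq_iff)
        ultimately show ?thesis by (simp add: sums_iff)
      qed
      ultimately have "P t * t^m = 0" using z[OF t] by simp
      then show ?case using t by simp
    qed
  qed
  then have "(P \<longlongrightarrow> 0) (at_right 0)" by (rule tendsto_eventually)
  moreover have "(P \<longlongrightarrow> d m) (at_right 0)"
    using lim by (simp add: filterlim_at_split)
  ultimately show ?case using tendsto_unique[of "at_right (0::real)"] by fastforce
qed

lemma hext_zero_everywhere:
  assumes hx: "\<And>x. hext Ob x" and e: "e > 0" and z: "\<And>y. \<bar>y\<bar> < e \<Longrightarrow> Ob y = 0"
  shows "Ob x = 0"
proof -
  define A where "A = {x. \<exists>e>0. \<forall>y. \<bar>y - x\<bar> < e \<longrightarrow> Ob y = 0}"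
  have openA: "open A" unfolding open_dist
  proof
    fix x assume "x \<in> A"
    then obtain e where e: "e > 0" "\<And>y. \<bar>y - x\<bar> < e \<Longrightarrow> Ob y = 0" unfolding A_def by blast
    show "\<exists>e>0. \<forall>y. dist y x < e \<longrightarrow> y \<in> A"
    proof (intro exI[of _ e] conjI allI impI)
      show "e > 0" by fact
      fix y assume "dist y x < e"
      then show "y \<in> A" unfolding A_def using e
        by (intro CollectI exI[of _ "e - dist y x"]) (auto simp: dist_real_def)
    qed
  qed
  have closedA: "closed A"
    unfolding closed_limpt
  proof (intro allI impI)
    fix x assume lp: "x islimpt A"
    obtain r g where r: "r > 0" and hol: "g holomorphic_on ball (complex_of_real x) r"
      and ext: "\<And>y. \<bar>y - x\<bar> < r \<Longrightarrow> g (of_real y) = of_real (Ob y)"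
      using hextE[OF hx[of x]] by blast
    obtain x' where x': "x' \<in> A" "dist x' x < r" using lp r unfolding islimpt_approachable by blast
    obtain e where e: "e > 0" and ze: "\<And>y. \<bar>y - x'\<bar> < e \<Longrightarrow> Ob y = 0" using x'(1) unfolding A_def by blast
    define e' where "e' = min e (r - dist x' x)"
    have e': "e' > 0" using e x'(2) by (simp add: e'_def)
    define Z where "Z = complex_of_real ` {x' - e' <..< x' + e'}"
    have Zsub: "Z \<subseteq> ball (complex_of_real x) r"
    proof
      fix z assume "z \<in> Z"
      then obtain y where y: "z = of_real y" "x' - e' < y" "y < x' + e'" unfolding Z_def by auto
      have "\<bar>y - x\<bar> < r" using y(2,3) x'(2) by (auto simp: e'_def dist_real_def)
      then show "z \<in> ball (complex_of_real x) r" by (simp only: y(1) ball_of_real_iff)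
    qed
    have x'in: "complex_of_real x' \<in> ball (complex_of_real x) r"
      using x'(2) by (simp add: ball_of_real_iff dist_real_def)
    have lpZ: "complex_of_real x' islimpt Z"
      unfolding islimpt_approachable
    proof (intro allI impI)
      fix \<epsilon> :: real assume \<epsilon>: "\<epsilon> > 0"
      define s where "s = min \<epsilon> e' / 2"
      have s: "0 < s" "s < \<epsilon>" "s < e'" using \<epsilon> e' by (auto simp: s_def)
      show "\<exists>z\<in>Z. z \<noteq> complex_of_real x' \<and> dist z (complex_of_real x') < \<epsilon>"
      proof (intro bexI conjI)
        show "complex_of_real (x' + s) \<in> Z" unfolding Z_def by (rule imageI) (use s in auto)
        show "complex_of_real (x' + s) \<noteq> complex_of_real x'" using s by simp
        show "dist (complex_of_real (x' + s)) (complex_of_real x') < \<epsilon>"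
          using s by (simp only: dist_of_real dist_real_def)
      qed
    qed
    have gZ: "g z = 0" if zZ: "z \<in> Z" for z
    proof -
      obtain y where y: "z = of_real y" "x' - e' < y" "y < x' + e'" using zZ unfolding Z_def by auto
      have "\<bar>y - x'\<bar> < e" using y by (auto simp: e'_def)
      moreover have "\<bar>y - x\<bar> < r" using y(2,3) x'(2) by (auto simp: e'_def dist_real_def)
      ultimately show ?thesis using ze ext y(1) by simp
    qed
    have "\<forall>y. \<bar>y - x\<bar> < r \<longrightarrow> Ob y = 0"
    proof (intro allI impI)
      fix y assume y: "\<bar>y - x\<bar> < r"
      have yin: "complex_of_real y \<in> ball (complex_of_real x) r" by (subst ball_of_real_iff) (rule y)
      have "g (of_real y) = 0"
        using analytic_continuation[OF hol open_ball connected_ball Zsub x'in lpZ gZ yin] by blast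
      then show "Ob y = 0" using ext[OF y] by simp
    qed
    then show "x \<in> A" unfolding A_def using r by blast
  qed
  have "0 \<in> A" unfolding A_def using e z by auto
  then have "A = UNIV" using clopen[of A] openA closedA by blast
  then have "x \<in> A" by simp
  then show ?thesis unfolding A_def by force
qed


lemma hext_add:
  assumes "hext f x" "hext g x"
  shows "hext (\<lambda>y. a * f y + b * g y) x"
proof -
  obtain r1 g1 where r1: "r1 > 0" and h1: "g1 holomorphic_on ball (complex_of_real x) r1"
    and e1: "\<And>y. \<bar>y - x\<bar> < r1 \<Longrightarrow> g1 (of_real y) = of_real (f y)"
    using hextE[OF assms(1)] by blast
  obtain r2 g2 where r2: "r2 > 0" and h2: "g2 holomorphic_on ball (complex_of_real x) r2"
    and e2: "\<And>y. \<bar>y - x\<bar> < r2 \<Longrightarrow> g2 (of_real y) = of_real (g y)"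
    using hextE[OF assms(2)] by blast
  define r where "r = min r1 r2"
  have r: "r > 0" using r1 r2 by (simp add: r_def)
  have "ball (complex_of_real x) r \<subseteq> ball (complex_of_real x) r1" by (rule subset_ball) (simp add: r_def)
  then have h1': "g1 holomorphic_on ball (complex_of_real x) r" using h1 holomorphic_on_subset by blast
  have "ball (complex_of_real x) r \<subseteq> ball (complex_of_real x) r2" by (rule subset_ball) (simp add: r_def)
  then have h2': "g2 holomorphic_on ball (complex_of_real x) r" using h2 holomorphic_on_subset by blast
  have hol: "(\<lambda>z. of_real a * g1 z + of_real b * g2 z) holomorphic_on ball (complex_of_real x) r"
    by (intro holomorphic_intros h1' h2')
  have "of_real a * g1 (of_real y) + of_real b * g2 (of_real y) = of_real (a * f y + b * g y)"
    if "\<bar>y - x\<bar> < r" for y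
    using e1[of y] e2[of y] that by (simp add: r_def)
  then show ?thesis unfolding hext_def using r hol by blast
qed

lemma hext_reflect:
  assumes "hext f (-x)"
  shows "hext (\<lambda>y. f (- y)) x"
proof -
  obtain r g where r: "r > 0" and h: "g holomorphic_on ball (complex_of_real (-x)) r"
    and e: "\<And>y. \<bar>y - (-x)\<bar> < r \<Longrightarrow> g (of_real y) = of_real (f y)"
    using hextE[OF assms] by blast
  have sub: "uminus ` ball (complex_of_real x) r \<subseteq> ball (complex_of_real (-x)) r"
    by (auto simp: dist_norm norm_minus_commute)
  have "(g \<circ> uminus) holomorphic_on ball (complex_of_real x) r"
    by (rule holomorphic_on_compose_gen[OF _ h sub]) (intro holomorphic_intros)
  then have hol: "(\<lambda>z. g (- z)) holomorphic_on ball (complex_of_real x) r" by (simp add: o_def)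
  have "g (- of_real y) = of_real (f (- y))" if "\<bar>y - x\<bar> < r" for y
    using e[of "-y"] that by simp
  then show ?thesis unfolding hext_def using r hol by auto
qed

context vsetup
begin

lemma Vinv_V: assumes "\<theta> > 0" shows "Vinv V \<theta> = W (sqrt \<theta>)"
  unfolding Vinv_def
proof (rule the_equality)
  have "Vs (W (sqrt \<theta>)) > 0" using assms by (simp add: Vs_W)
  then have "W (sqrt \<theta>) > 0" using Vs_mono[of "W (sqrt \<theta>)" 0] Vs_0 by (cases "W (sqrt \<theta>) \<le> 0") (auto simp: le_less)
  then show "0 \<le> W (sqrt \<theta>) \<and> V (W (sqrt \<theta>)) = \<theta>" using assms by (simp add: V_W)
next
  fix y assume y: "0 \<le> y \<and> V y = \<theta>"
  then have "y \<noteq> 0" using assms UM unfolding UM_def by auto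
  then have "Vs y = sqrt \<theta>" using y by (simp add: Vstar_def)
  then show "y = W (sqrt \<theta>)" using W_Vs[of y] by simp
qed

lemma Vinv_Vbar: assumes "\<theta> > 0" shows "Vinv (Vbar V) \<theta> = - W (- sqrt \<theta>)"
  unfolding Vinv_def
proof (rule the_equality)
  have "Vs (W (- sqrt \<theta>)) < 0" using assms by (simp add: Vs_W)
  then have "W (- sqrt \<theta>) < 0" using Vs_mono[of 0 "W (- sqrt \<theta>)"] Vs_0 by (cases "W (- sqrt \<theta>) \<ge> 0") (auto simp: le_less)
  then show "0 \<le> - W (- sqrt \<theta>) \<and> Vbar V (- W (- sqrt \<theta>)) = \<theta>" using assms by (simp add: V_W Vbar_def)
next
  fix y assume y: "0 \<le> y \<and> Vbar V y = \<theta>"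
  then have "y \<noteq> 0" using assms UM unfolding UM_def Vbar_def by auto
  then have "Vs (- y) = - sqrt \<theta>" using y by (simp add: Vstar_def Vbar_def)
  then show "y = - W (- sqrt \<theta>)" using W_Vs[of "-y"] by simp
qed

lemma V_meas: "V \<in> borel_measurable borel"
  by (rule borel_measurable_continuous_onI[OF UM_cont[OF UM]])

lemma afun_V: assumes "\<theta> > 0"
  shows "afun V \<theta> = integral {0..pi/2} (\<lambda>\<phi>. deriv W (sqrt \<theta> * sin \<phi>)) / sqrt 2"
proof (rule afun_subst[where w=W and w'="deriv W" and Q=V, OF assms W_0 _ W'_cont])
  show "(W has_real_derivative deriv W x) (at x)" for x using W_DERIV W_deriv by simp
  show "0 \<le> deriv W x" for x using W_deriv_pos less_imp_le by blast
  show "V (W x) = x^2" for x by (rule V_W)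
  show "V \<in> borel_measurable borel" by (rule V_meas)
  show "Vinv V \<theta> = W (sqrt \<theta>)" using Vinv_V[OF assms] .
qed

lemma afun_Vbar: assumes "\<theta> > 0"
  shows "afun (Vbar V) \<theta> = integral {0..pi/2} (\<lambda>\<phi>. deriv W (- (sqrt \<theta> * sin \<phi>))) / sqrt 2"
proof (rule afun_subst[where w = "\<lambda>x. - W (- x)" and w' = "\<lambda>x. deriv W (- x)", OF assms])
  show "- W (- 0) = 0" using W_0 by simp
  show "((\<lambda>x. - W (- x)) has_real_derivative deriv W (- x)) (at x)" for x
  proof -
    have "((\<lambda>x. W (- x)) has_real_derivative deriv W (- x) * (- 1)) (at x)"
      using DERIV_chain2[OF W_DERIV[of "-x", folded W_deriv] DERIV_minus[OF DERIV_ident]] by simp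
    from DERIV_minus[OF this] show ?thesis by simp
  qed
  show "isCont (\<lambda>x. deriv W (- x)) x" for x
  proof -
    have "isCont (\<lambda>x. - x) x" by (intro continuous_intros)
    from isCont_o2[OF this W'_cont] show ?thesis .
  qed
  show "0 \<le> deriv W (- x)" for x using W_deriv_pos less_imp_le by blast
  show "Vbar V (- W (- x)) = x^2" for x by (simp add: Vbar_def V_W)
  show "Vbar V \<in> borel_measurable borel" unfolding Vbar_def[abs_def] using V_meas by measurable
  show "Vinv (Vbar V) \<theta> = - W (- sqrt \<theta>)" using Vinv_Vbar[OF assms] .
qed

end


theorem lemma5:
  fixes V :: "real \<Rightarrow> real" and \<gamma> \<gamma>' :: real and U :: "real \<Rightarrow> real"
  assumes "UM V" and "deg0 V = 2"
    and "\<gamma> \<ge> 0" and "\<gamma>' \<ge> 0" and "\<gamma> + \<gamma>' > 0"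
    and "U = (\<lambda>x. \<gamma> * deriv (Wfun V) x + \<gamma>' * deriv (Wfun V) (- x))"
    and "\<exists>S f. open S \<and> {0..} \<subseteq> S \<and> real_analytic_on S f \<and>
           (\<forall>\<theta>>0. f \<theta> = \<gamma> * afun V \<theta> + \<gamma>' * afun (Vbar V) \<theta>)"
  shows "(\<forall>x. U (- x) = U x) \<and> ((\<exists>y. V (- y) \<noteq> V y) \<longrightarrow> \<gamma> = \<gamma>')"
proof -
  interpret vsetup V using assms(1,2) by unfold_locales
  obtain S f where S0: "0 \<in> S" and fa: "real_analytic_on S f"
    and fe: "\<And>\<theta>. \<theta> > 0 \<Longrightarrow> f \<theta> = \<gamma> * afun V \<theta> + \<gamma>' * afun (Vbar V) \<theta>"
    using assms(7) by auto
  have Ux: "U x = \<gamma> * deriv W x + \<gamma>' * deriv W (- x)" for x using assms(6) by simp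
  have U_hext: "hext U x" for x
  proof -
    have "hext (\<lambda>y. \<gamma> * deriv W y + \<gamma>' * deriv W (- y)) x"
      by (rule hext_add[OF W'_hext hext_reflect[OF W'_hext]])
    then show ?thesis using assms(6) by simp
  qed
  have intrep: "f \<theta> = integral {0..pi/2} (\<lambda>\<phi>. U (sqrt \<theta> * sin \<phi>)) / sqrt 2" if "\<theta> > 0" for \<theta>
  proof -
    have c1: "continuous_on {0..pi/2} (\<lambda>\<phi>. deriv W (sqrt \<theta> * sin \<phi>))"
      by (intro continuous_at_imp_continuous_on ballI isCont_o2[OF _ W'_cont] continuous_intros)
    have c2: "continuous_on {0..pi/2} (\<lambda>\<phi>. deriv W (- (sqrt \<theta> * sin \<phi>)))"
      by (intro continuous_at_imp_continuous_on ballI isCont_o2[OF _ W'_cont] continuous_intros)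
    have i1: "(\<lambda>\<phi>. deriv W (sqrt \<theta> * sin \<phi>)) integrable_on {0..pi/2}"
      by (rule integrable_continuous_interval[OF c1])
    have i2: "(\<lambda>\<phi>. deriv W (- (sqrt \<theta> * sin \<phi>))) integrable_on {0..pi/2}"
      by (rule integrable_continuous_interval[OF c2])
    have "integral {0..pi/2} (\<lambda>\<phi>. U (sqrt \<theta> * sin \<phi>)) =
      \<gamma> * integral {0..pi/2} (\<lambda>\<phi>. deriv W (sqrt \<theta> * sin \<phi>))
      + \<gamma>' * integral {0..pi/2} (\<lambda>\<phi>. deriv W (- (sqrt \<theta> * sin \<phi>)))"
    proof -
      have a1: "(\<lambda>\<phi>. \<gamma> * deriv W (sqrt \<theta> * sin \<phi>)) integrable_on {0..pi/2}"
        using integrable_on_cmult_left[OF i1, of \<gamma>] by simp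
      have a2: "(\<lambda>\<phi>. \<gamma>' * deriv W (- (sqrt \<theta> * sin \<phi>))) integrable_on {0..pi/2}"
        using integrable_on_cmult_left[OF i2, of \<gamma>'] by simp
      show ?thesis unfolding Ux using integral_add[OF a1 a2] by simp
    qed
    then show ?thesis using fe[OF that] afun_V[OF that] afun_Vbar[OF that]
      by (simp add: add_divide_distrib)
  qed
  obtain rU Ug where rU: "rU > 0" and holU: "Ug holomorphic_on ball (complex_of_real 0) rU"
    and extU: "\<And>y. \<bar>y - 0\<bar> < rU \<Longrightarrow> Ug (of_real y) = of_real (U y)"
    using hextE[OF U_hext[of 0]] by blast
  define u where "u n = (deriv ^^ n) U 0 / fact n" for n
  have Userr: "(\<lambda>n. u n * x^n) sums U x" if x: "\<bar>x\<bar> < rU" for x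
  proof -
    have xin: "complex_of_real x \<in> ball (complex_of_real 0) rU" using x by (subst ball_of_real_iff) simp
    have "(\<lambda>n. (deriv ^^ n) Ug (of_real 0) / fact n * (of_real x - of_real 0)^n) sums Ug (of_real x)"
      using holomorphic_power_series[OF holU xin] .
    moreover have "(deriv ^^ n) Ug (of_real 0) = of_real ((deriv ^^ n) U 0)" for n
      using hext_higher[OF holU extU, of 0 n] rU by simp
    ultimately have "(\<lambda>n. complex_of_real (u n * x^n)) sums of_real (U x)"
      using extU[of x] x by (simp add: u_def)
    then show ?thesis by (subst (asm) sums_of_real_iff)
  qed
  obtain \<rho> b where \<rho>: "\<rho> > 0" and fser: "\<And>y. \<bar>y - 0\<bar> < \<rho> \<Longrightarrow> (\<lambda>n. b n * (y - 0)^n) sums f y"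
    using fa S0 unfolding real_analytic_on_def real_analytic_at_def by blast
  define \<delta> where "\<delta> = min rU (sqrt \<rho>)"
  have \<delta>: "\<delta> > 0" using rU \<rho> by (simp add: \<delta>_def)
  define d where "d n = (if even n then b (n div 2) else 0) - u n * Cn n / sqrt 2" for n
  have dsum: "(\<lambda>n. d n * t^n) sums (f (t^2) - integral {0..pi/2} (\<lambda>\<phi>. U (t * sin \<phi>)) / sqrt 2)"
    if t: "\<bar>t\<bar> < \<delta>" for t
  proof -
    have "t^2 < \<rho>"
    proof -
      have "\<bar>t\<bar> < sqrt \<rho>" using t by (simp add: \<delta>_def)
      then have "\<bar>t\<bar>^2 < (sqrt \<rho>)^2" by (rule power_strict_mono) simp_all
      then show ?thesis using \<rho> by simp
    qed
    then have "(\<lambda>k. b k * (t^2)^k) sums f (t^2)" using fser[of "t^2"] by simp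
    from sums_if[OF sums_zero this]
    have "(\<lambda>n. if even n then b (n div 2) * (t^2)^(n div 2) else 0) sums f (t^2)" by simp
    moreover have "(if even n then b (n div 2) * (t^2)^(n div 2) else 0) = (if even n then b (n div 2) else 0) * t^n" for n
      by (cases "even n") (auto elim!: evenE simp: power_mult)
    ultimately have s1: "(\<lambda>n. (if even n then b (n div 2) else 0) * t^n) sums f (t^2)" by simp
    have "\<bar>t\<bar> < rU" using t by (simp add: \<delta>_def)
    from sums_divide[OF series_integral[OF Userr this], of "sqrt 2"]
    have s2: "(\<lambda>n. u n * Cn n / sqrt 2 * t^n) sums (integral {0..pi/2} (\<lambda>\<phi>. U (t * sin \<phi>)) / sqrt 2)"
      by simp
    from sums_diff[OF s1 s2] show ?thesis by (simp add: d_def algebra_simps)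
  qed
  have d0: "d n = 0" for n
  proof (rule powser_zero_right[OF \<delta>])
    show "summable (\<lambda>n. d n * t^n)" if "\<bar>t\<bar> < \<delta>" for t using dsum[OF that] by (simp add: sums_iff)
    show "(\<Sum>n. d n * t^n) = 0" if "0 < t" "t < \<delta>" for t
    proof -
      have "f (t^2) = integral {0..pi/2} (\<lambda>\<phi>. U (t * sin \<phi>)) / sqrt 2"
        using intrep[of "t^2"] that by simp
      then show ?thesis using dsum[of t] that by (simp add: sums_iff)
    qed
  qed
  have uodd: "u n = 0" if "odd n" for n
  proof -
    have "u n * Cn n / sqrt 2 = 0" using d0[of n] that by (simp add: d_def)
    then show ?thesis using Cn_pos[of n] by simp
  qed
  have Ueven0: "U (- x) - U x = 0" if x: "\<bar>x\<bar> < rU" for x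
  proof -
    have "(\<lambda>n. u n * (- x)^n) sums U (- x)" using Userr[of "-x"] x by simp
    moreover have "u n * (- x)^n = u n * x^n" for n
      by (cases "even n") (simp_all add: uodd)
    ultimately have "(\<lambda>n. u n * x^n) sums U (- x)" by simp
    then show ?thesis using Userr[OF x] sums_unique2 by fastforce
  qed
  have Ueven: "U (- x) = U x" for x
  proof -
    have h: "hext (\<lambda>y. 1 * U (- y) + (- 1) * U y) z" for z
      by (rule hext_add[OF hext_reflect[OF U_hext] U_hext])
    have "(\<lambda>y. 1 * U (- y) + (- 1) * U y) x = 0"
      by (rule hext_zero_everywhere[where Ob="\<lambda>y. 1 * U (- y) + (- 1) * U y", OF h rU]) (use Ueven0 in auto)
    then show ?thesis by simp
  qed
  show ?thesis
  proof (intro conjI allI impI)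
    show "U (- x) = U x" for x by (rule Ueven)
    assume "\<exists>y. V (- y) \<noteq> V y"
    then obtain y0 where y0: "V (- y0) \<noteq> V y0" by blast
    show "\<gamma> = \<gamma>'"
    proof (rule ccontr)
      assume ne: "\<gamma> \<noteq> \<gamma>'"
      have Weven: "deriv W (- x) = deriv W x" for x
      proof -
        have "\<gamma> * deriv W (- x) + \<gamma>' * deriv W x = \<gamma> * deriv W x + \<gamma>' * deriv W (- x)"
          using Ueven[of x] by (simp add: Ux)
        then have "(\<gamma> - \<gamma>') * (deriv W (- x) - deriv W x) = 0" by (simp add: algebra_simps)
        then show ?thesis using ne by simp
      qed
      have kd: "((\<lambda>x. W x + W (- x)) has_real_derivative 0) (at x)" for x
      proof -
        have "((\<lambda>x. W (- x)) has_real_derivative deriv W (- x) * (- 1)) (at x)"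
          using DERIV_chain2[OF W_DERIV[of "-x", folded W_deriv] DERIV_minus[OF DERIV_ident]] by simp
        from DERIV_add[OF W_DERIV[of x, folded W_deriv] this] show ?thesis using Weven[of x] by simp
      qed
      have Wodd: "W (- x) = - W x" for x
        using DERIV_isconst_all[of "\<lambda>x. W x + W (- x)" x 0] kd W_0 by simp
      have "W (- Vs y0) = - y0" using Wodd[of "Vs y0"] W_Vs by simp
      then have "Vs (- y0) = - Vs y0" using Vs_W[of "- Vs y0"] by simp
      then have "V (- y0) = V y0" using Vstar_sq[OF UM, of "- y0"] Vstar_sq[OF UM, of y0] by simp
      with y0 show False by simp
    qed
  qed
qed

end
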